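(* Let $g\in\mathcal{H}(\mathbb{D})$. (a) If $g(0)=0$ and $L=P(g)\delta_0\in\mathscr{A}_g$ for some polynomial $P$, then $L=0$. (b) A $g$-operator $L$ is trivial if and only if $L(z^\ell)=0$ for every $\ell\in\mathbb{N}$.
   Context: $\mathcal{H}(\mathbb{D})$ is the space of analytic functions on the unit disc. For $g\in\mathcal{H}(\mathbb{D})$, operators on $\mathcal{H}(\mathbb{D})$: $M_gf=fg$, $T_gf(z)=\int_0^zf(\zeta)g'(\zeta)\,d\zeta$, $S_gf(z)=\int_0^zf'(\zeta)g(\zeta)\,d\zeta$, $\delta_0f=f(0)$; $h\,\delta_0$ denotes $f\mapsto f(0)h$. $\mathscr{A}_g$ is the algebra generated by $M_g,S_g,T_g$ (linear span of finite compositions of these, at least one factor); its elements are called $g$-operators. A $g$-operator $L$ is trivial if $L=g(0)P(g-g(0))\delta_0$ for some polynomial $P$. $\mathbb{N}$ is the positive integers. *)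

theory Defs
  imports "HOL-Complex_Analysis.Complex_Analysis" "HOL-Computational_Algebra.Polynomial"
begin

type_synonym op = "(complex \<Rightarrow> complex) \<Rightarrow> (complex \<Rightarrow> complex)"

text \<open>Elements of H(D): functions holomorphic on the open unit disc
(values outside the disc are irrelevant).\<close>
definition HD :: "(complex \<Rightarrow> complex) set" where
  "HD = {f. f holomorphic_on ball 0 1}"

definition op_eq :: "op \<Rightarrow> op \<Rightarrow> bool" where
  "op_eq L L' \<longleftrightarrow> (\<forall>f\<in>HD. \<forall>z\<in>ball 0 1. L f z = L' f z)"

definition Mop :: "(complex \<Rightarrow> complex) \<Rightarrow> op" where
  "Mop g f = (\<lambda>z. f z * g z)"

definition Top :: "(complex \<Rightarrow> complex) \<Rightarrow> op" where
  "Top g f = (\<lambda>z. contour_integral (linepath 0 z) (\<lambda>\<zeta>. f \<zeta> * deriv g \<zeta>))"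

definition Sop :: "(complex \<Rightarrow> complex) \<Rightarrow> op" where
  "Sop g f = (\<lambda>z. contour_integral (linepath 0 z) (\<lambda>\<zeta>. deriv f \<zeta> * g \<zeta>))"

text \<open>The algebra generated by M_g, S_g, T_g: closed under composition and
linear combinations (= linear span of finite compositions, at least one factor).\<close>
inductive_set gops :: "(complex \<Rightarrow> complex) \<Rightarrow> op set" for g where
  gM: "Mop g \<in> gops g"
| gS: "Sop g \<in> gops g"
| gT: "Top g \<in> gops g"
| gcomp: "L1 \<in> gops g \<Longrightarrow> L2 \<in> gops g \<Longrightarrow> (L1 \<circ> L2) \<in> gops g"
| gadd: "L1 \<in> gops g \<Longrightarrow> L2 \<in> gops g \<Longrightarrow> (\<lambda>f z. L1 f z + L2 f z) \<in> gops g"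
| gscale: "L \<in> gops g \<Longrightarrow> (\<lambda>f z. c * L f z) \<in> gops g"

definition trivial_gop :: "(complex \<Rightarrow> complex) \<Rightarrow> op \<Rightarrow> bool" where
  "trivial_gop g L \<longleftrightarrow>
     (\<exists>P :: complex poly. op_eq L (\<lambda>f z. g 0 * poly P (g z - g 0) * f 0))"

end

theory Submission
  imports Defs
begin


lemma seg_ball: "z \<in> ball (0::complex) 1 \<Longrightarrow> closed_segment 0 z \<subseteq> ball 0 1"
  by (simp add: closed_segment_subset)

lemma line_integrable:
  assumes h: "h holomorphic_on ball 0 1" and z: "z \<in> ball 0 1"
  shows "h contour_integrable_on linepath 0 z"
  by (rule contour_integrable_holomorphic_simple[OF h open_ball valid_path_linepath]) (simp add: seg_ball[OF z])

lemma line_prim: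
  assumes h: "h holomorphic_on ball 0 1"
  obtains G where "\<And>x. x \<in> ball 0 1 \<Longrightarrow> (G has_field_derivative h x) (at x)"
    "\<And>z. z \<in> ball 0 1 \<Longrightarrow> contour_integral (linepath 0 z) h = G z - G 0"
proof -
  obtain G where G: "\<And>x. x \<in> ball 0 1 \<Longrightarrow> (G has_field_derivative h x) (at x within ball 0 1)"
    using holomorphic_convex_primitive'[OF convex_ball open_ball h] by blast
  have G': "(G has_field_derivative h x) (at x)" if "x \<in> ball 0 1" for x
    using G[OF that] at_within_open[OF that open_ball] by simp
  have "contour_integral (linepath 0 z) h = G z - G 0" if zb: "z \<in> ball 0 1" for z
  proof -
    have pz: "path_image (linepath 0 z) \<subseteq> ball 0 1" using seg_ball[OF zb] by simp
    have "(h has_contour_integral (G (pathfinish (linepath 0 z)) - G (pathstart (linepath 0 z)))) (linepath 0 z)"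
      by (rule contour_integral_primitive[OF G valid_path_linepath pz])
    then show ?thesis by (simp add: contour_integral_unique)
  qed
  with G' that show ?thesis by blast
qed

lemma line_int_deriv:
  assumes h: "h holomorphic_on ball 0 1" and x: "x \<in> ball 0 1"
  shows "((\<lambda>z. contour_integral (linepath 0 z) h) has_field_derivative h x) (at x)"
proof -
  obtain G where G: "\<And>x. x \<in> ball 0 1 \<Longrightarrow> (G has_field_derivative h x) (at x)"
    "\<And>z. z \<in> ball 0 1 \<Longrightarrow> contour_integral (linepath 0 z) h = G z - G 0"
    using line_prim[OF h] by blast
  have "((\<lambda>z. G z - G 0) has_field_derivative h x - 0) (at x)"
    by (rule DERIV_diff[OF G(1)[OF x] DERIV_const])
  then have "((\<lambda>z. G z - G 0) has_field_derivative h x) (at x)" by simp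
  moreover have "\<And>y. y \<in> ball 0 1 \<Longrightarrow> G y - G 0 = contour_integral (linepath 0 y) h"
    by (simp add: G(2))
  ultimately show ?thesis
    by (rule has_field_derivative_transform_within_open[OF _ open_ball x])
qed

lemma line_int_holo:
  assumes h: "h holomorphic_on ball 0 1"
  shows "(\<lambda>z. contour_integral (linepath 0 z) h) holomorphic_on ball 0 1"
  unfolding holomorphic_on_open[OF open_ball] using line_int_deriv[OF h] by blast

lemma HD_deriv: "f \<in> HD \<Longrightarrow> deriv f holomorphic_on ball 0 1"
  by (simp add: HD_def holomorphic_deriv)

lemma HD_Mop: "g holomorphic_on ball 0 1 \<Longrightarrow> f \<in> HD \<Longrightarrow> Mop g f \<in> HD"
  unfolding HD_def Mop_def mem_Collect_eq by (rule holomorphic_on_mult)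

lemma HD_Top: "g holomorphic_on ball 0 1 \<Longrightarrow> f \<in> HD \<Longrightarrow> Top g f \<in> HD"
  unfolding HD_def Top_def mem_Collect_eq
  by (intro line_int_holo holomorphic_on_mult holomorphic_deriv open_ball)

lemma HD_Sop: "g holomorphic_on ball 0 1 \<Longrightarrow> f \<in> HD \<Longrightarrow> Sop g f \<in> HD"
  unfolding Sop_def HD_def mem_Collect_eq
  by (intro line_int_holo holomorphic_on_mult holomorphic_deriv open_ball)

lemma deriv_lin:
  assumes "f1 \<in> HD" "f2 \<in> HD" "f \<in> HD" "\<forall>z\<in>ball 0 1. f z = a * f1 z + b * f2 z" "z \<in> ball 0 1"
  shows "deriv f z = a * deriv f1 z + b * deriv f2 z"
proof -
  have h1: "f1 holomorphic_on ball 0 1" "f2 holomorphic_on ball 0 1" using assms(1,2) by (simp_all add: HD_def)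
  have d1: "(f1 has_field_derivative deriv f1 z) (at z)"
    by (rule holomorphic_derivI[OF h1(1) open_ball assms(5)])
  have d2: "(f2 has_field_derivative deriv f2 z) (at z)"
    by (rule holomorphic_derivI[OF h1(2) open_ball assms(5)])
  have "((\<lambda>w. a * f1 w + b * f2 w) has_field_derivative (a * deriv f1 z + b * deriv f2 z)) (at z)"
    by (rule DERIV_add[OF DERIV_cmult[OF d1] DERIV_cmult[OF d2]])
  moreover have "\<And>x. x \<in> ball 0 1 \<Longrightarrow> a * f1 x + b * f2 x = f x" using assms(4) by simp
  ultimately have "((f has_field_derivative (a * deriv f1 z + b * deriv f2 z)) (at z))"
    by (rule has_field_derivative_transform_within_open[OF _ open_ball assms(5)])
  then show ?thesis by (rule DERIV_imp_deriv)
qed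



definition luc :: "(nat \<Rightarrow> complex \<Rightarrow> complex) \<Rightarrow> (complex \<Rightarrow> complex) \<Rightarrow> bool" where
  "luc F f \<longleftrightarrow> (\<forall>r<1. uniform_limit (cball 0 r) F f sequentially)"

lemma cball_sub: "r < 1 \<Longrightarrow> cball (0::complex) r \<subseteq> ball 0 1"
  by auto

lemma bound_on_cball:
  assumes "h holomorphic_on ball 0 1" "r < 1"
  obtains B where "B > 0" "\<And>x. x \<in> cball 0 r \<Longrightarrow> norm (h x) \<le> B"
proof -
  have "continuous_on (cball 0 r) h"
    using assms by (meson cball_sub holomorphic_on_imp_continuous_on holomorphic_on_subset)
  then have "compact (h ` cball 0 r)"
    by (rule compact_continuous_image[OF _ compact_cball])
  then have "bounded (h ` cball 0 r)" by (rule compact_imp_bounded)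
  then show ?thesis using that by (auto simp: bounded_pos)
qed

lemma int_luc:
  assumes H: "\<And>n. H n holomorphic_on ball 0 1" and h: "h holomorphic_on ball 0 1"
    and k: "k holomorphic_on ball 0 1" and L: "luc H h"
  shows "luc (\<lambda>n z. contour_integral (linepath 0 z) (\<lambda>\<zeta>. H n \<zeta> * k \<zeta>))
             (\<lambda>z. contour_integral (linepath 0 z) (\<lambda>\<zeta>. h \<zeta> * k \<zeta>))"
  unfolding luc_def
proof (intro allI impI uniform_limitI)
  fix r :: real and e :: real assume r: "r < 1" and e: "0 < e"
  define r0 where "r0 = max r 0"
  have r0: "r0 < 1" "0 \<le> r0" "r \<le> r0" using r by (auto simp: r0_def)
  obtain B where B: "B > 0" "\<And>x. x \<in> cball 0 r0 \<Longrightarrow> norm (k x) \<le> B"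
    using bound_on_cball[OF k r0(1)] by blast
  have "uniform_limit (cball 0 r0) H h sequentially" using L r0 by (simp add: luc_def)
  moreover have "e / (2*B) > 0" using e B by simp
  ultimately have ev: "\<forall>\<^sub>F n in sequentially. \<forall>x\<in>cball 0 r0. dist (H n x) (h x) < e / (2*B)"
    using uniform_limitD by blast
  then show "\<forall>\<^sub>F n in sequentially. \<forall>z\<in>cball 0 r. dist (contour_integral (linepath 0 z) (\<lambda>\<zeta>. H n \<zeta> * k \<zeta>))
             (contour_integral (linepath 0 z) (\<lambda>\<zeta>. h \<zeta> * k \<zeta>)) < e"
  proof eventually_elim
    case (elim n)
    show ?case
    proof
      fix z :: complex assume z: "z \<in> cball 0 r"
      have zb: "z \<in> ball 0 1" using z r by auto
      have z1: "norm z \<le> 1" using zb by auto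
      have seg: "closed_segment 0 z \<subseteq> cball 0 r0"
        by (rule closed_segment_subset) (use z r0 in auto)
      have i1: "(\<lambda>\<zeta>. H n \<zeta> * k \<zeta>) contour_integrable_on linepath 0 z"
        by (rule line_integrable[OF _ zb]) (intro holomorphic_intros H k)
      have i2: "(\<lambda>\<zeta>. h \<zeta> * k \<zeta>) contour_integrable_on linepath 0 z"
        by (rule line_integrable[OF _ zb]) (intro holomorphic_intros h k)
      have "contour_integral (linepath 0 z) (\<lambda>\<zeta>. H n \<zeta> * k \<zeta>) - contour_integral (linepath 0 z) (\<lambda>\<zeta>. h \<zeta> * k \<zeta>)
          = contour_integral (linepath 0 z) (\<lambda>\<zeta>. H n \<zeta> * k \<zeta> - h \<zeta> * k \<zeta>)"
        by (rule contour_integral_diff[OF i1 i2, symmetric])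
      also have "norm \<dots> \<le> (e/(2*B) * B) * norm (z - 0)"
      proof (rule contour_integral_bound_linepath)
        show "(\<lambda>\<zeta>. H n \<zeta> * k \<zeta> - h \<zeta> * k \<zeta>) contour_integrable_on linepath 0 z"
          by (rule line_integrable[OF _ zb]) (intro holomorphic_intros H h k)
        show "0 \<le> e / (2 * B) * B" using e B by simp
        fix x assume x: "x \<in> closed_segment 0 z"
        then have xc: "x \<in> cball 0 r0" using seg by auto
        have "norm (H n x * k x - h x * k x) = norm (H n x - h x) * norm (k x)"
          by (simp add: norm_mult[symmetric] algebra_simps)
        also have "\<dots> \<le> e / (2*B) * B"
          using elim xc B(2)[OF xc] B(1) e by (intro mult_mono) (auto simp: dist_norm less_imp_le)
        finally show "norm (H n x * k x - h x * k x) \<le> e / (2 * B) * B" .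
      qed
      also have "\<dots> = e / 2 * norm z" using B by simp
      also have "\<dots> \<le> e / 2" using z1 e by (simp add: mult_left_le)
      finally show "dist (contour_integral (linepath 0 z) (\<lambda>\<zeta>. H n \<zeta> * k \<zeta>))
             (contour_integral (linepath 0 z) (\<lambda>\<zeta>. h \<zeta> * k \<zeta>)) < e"
        using e by (simp add: dist_norm)
    qed
  qed
qed

lemma mult_luc:
  assumes k: "k holomorphic_on ball 0 1" and L: "luc H h"
  shows "luc (\<lambda>n z. H n z * k z) (\<lambda>z. h z * k z)"
  unfolding luc_def
proof (intro allI impI uniform_limitI)
  fix r :: real and e :: real assume r: "r < 1" and e: "0 < e"
  obtain B where B: "B > 0" "\<And>x. x \<in> cball 0 r \<Longrightarrow> norm (k x) \<le> B"
    using bound_on_cball[OF k r] by blast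
  have "uniform_limit (cball 0 r) H h sequentially" using L r by (simp add: luc_def)
  moreover have "e / (2*B) > 0" using e B by simp
  ultimately have ev: "\<forall>\<^sub>F n in sequentially. \<forall>x\<in>cball 0 r. dist (H n x) (h x) < e / (2*B)"
    using uniform_limitD by blast
  then show "\<forall>\<^sub>F n in sequentially. \<forall>z\<in>cball 0 r. dist (H n z * k z) (h z * k z) < e"
  proof eventually_elim
    case (elim n)
    show ?case
    proof
      fix x :: complex assume xc: "x \<in> cball 0 r"
      have "dist (H n x * k x) (h x * k x) = norm (H n x - h x) * norm (k x)"
        by (simp add: dist_norm norm_mult[symmetric] algebra_simps)
      also have "\<dots> \<le> e / (2*B) * B"
        using elim xc B(2)[OF xc] B(1) e by (intro mult_mono) (auto simp: dist_norm less_imp_le)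
      also have "\<dots> < e" using B e by simp
      finally show "dist (H n x * k x) (h x * k x) < e" .
    qed
  qed
qed

lemma deriv_luc:
  assumes F: "\<And>n. F n holomorphic_on ball 0 1" and f: "f holomorphic_on ball 0 1" and L: "luc F f"
  shows "luc (\<lambda>n. deriv (F n)) (deriv f)"
  unfolding luc_def
proof (intro allI impI uniform_limitI)
  fix r e :: real assume r: "r < 1" and e: "0 < e"
  define r0 where "r0 = max r 0"
  have r0: "r0 < 1" "0 \<le> r0" "r \<le> r0" using r by (auto simp: r0_def)
  define d where "d = (1 - r0) / 2"
  have d: "d > 0" "r0 + d < 1" using r0 unfolding d_def by (auto simp: field_simps)
  have "uniform_limit (cball 0 (r0 + d)) F f sequentially" using L d by (simp add: luc_def)
  moreover have "e * d / 2 > 0" using e d by simp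
  ultimately have ev: "\<forall>\<^sub>F n in sequentially. \<forall>x\<in>cball 0 (r0+d). dist (F n x) (f x) < e * d / 2"
    using uniform_limitD by blast
  then show "\<forall>\<^sub>F n in sequentially. \<forall>x\<in>cball 0 r. dist (deriv (F n) x) (deriv f x) < e"
  proof eventually_elim
    case (elim n)
    show ?case
    proof
      fix \<xi> :: complex assume xi: "\<xi> \<in> cball 0 r"
      have sub: "cball \<xi> d \<subseteq> cball 0 (r0 + d)"
      proof
        fix x assume "x \<in> cball \<xi> d"
        then have "norm x \<le> norm \<xi> + d"
          by (metis dist_norm mem_cball norm_triangle_sub add.commute add_le_cancel_left order_trans norm_minus_commute)
        then show "x \<in> cball 0 (r0 + d)" using xi r0 by auto
      qed
      have sub1: "cball 0 (r0+d) \<subseteq> ball (0::complex) 1" using d by auto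
      have sub2: "ball \<xi> d \<subseteq> ball 0 1" using sub sub1 ball_subset_cball[of \<xi> d] by blast
      have sub3: "cball \<xi> d \<subseteq> ball 0 1" using sub sub1 by blast
      have hol0: "(\<lambda>w. F n w - f w) holomorphic_on ball 0 1"
        by (intro holomorphic_intros F f)
      have hol: "(\<lambda>w. F n w - f w) holomorphic_on ball \<xi> d"
        by (rule holomorphic_on_subset[OF hol0 sub2])
      have cont: "continuous_on (cball \<xi> d) (\<lambda>w. F n w - f w)"
        by (rule holomorphic_on_imp_continuous_on, rule holomorphic_on_subset[OF hol0 sub3])
      have "norm ((deriv ^^ 1) (\<lambda>w. F n w - f w) \<xi>) \<le> fact 1 * (e*d/2) / d^1"
      proof (rule Cauchy_inequality[OF hol cont d(1)])
        fix x assume "norm (\<xi> - x) = d"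
        then have "x \<in> cball 0 (r0 + d)" using sub by (auto simp: dist_norm)
        then show "norm (F n x - f x) \<le> e * d / 2" using elim by (auto simp: dist_norm less_imp_le)
      qed
      also have "\<dots> = e / 2" using d by simp
      finally have 1: "norm (deriv (\<lambda>w. F n w - f w) \<xi>) \<le> e / 2" by simp
      have xib: "\<xi> \<in> ball 0 1" using xi r by auto
      have "deriv (\<lambda>w. F n w - f w) \<xi> = deriv (F n) \<xi> - deriv f \<xi>"
        by (rule deriv_diff[OF holomorphic_on_imp_differentiable_at[OF F open_ball xib]
                                holomorphic_on_imp_differentiable_at[OF f open_ball xib]])
      with 1 e show "dist (deriv (F n) \<xi>) (deriv f \<xi>) < e" by (simp add: dist_norm)
    qed
  qed
qed



definition lin :: "op \<Rightarrow> bool" where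
  "lin L \<longleftrightarrow> (\<forall>f1 f2 f a b. f1 \<in> HD \<longrightarrow> f2 \<in> HD \<longrightarrow> f \<in> HD \<longrightarrow>
      (\<forall>z\<in>ball 0 1. f z = a * f1 z + b * f2 z) \<longrightarrow> (\<forall>z\<in>ball 0 1. L f z = a * L f1 z + b * L f2 z))"

definition lcont :: "op \<Rightarrow> bool" where
  "lcont L \<longleftrightarrow> (\<forall>F f. (\<forall>n. F n \<in> HD) \<longrightarrow> f \<in> HD \<longrightarrow> luc F f \<longrightarrow> luc (\<lambda>n. L (F n)) (L f))"

definition good :: "op \<Rightarrow> bool" where
  "good L \<longleftrightarrow> (\<forall>f\<in>HD. L f \<in> HD) \<and> lin L \<and> lcont L"

lemma linD:
  assumes "lin L" "f1 \<in> HD" "f2 \<in> HD" "f \<in> HD" "\<And>z. z \<in> ball 0 1 \<Longrightarrow> f z = a * f1 z + b * f2 z" "z \<in> ball 0 1"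
  shows "L f z = a * L f1 z + b * L f2 z"
  using assms unfolding lin_def by blast

lemma good_M:
  assumes g: "g holomorphic_on ball 0 1" shows "good (Mop g)"
proof -
  have "lin (Mop g)" unfolding lin_def Mop_def by (auto simp: algebra_simps)
  moreover have "lcont (Mop g)" unfolding lcont_def Mop_def using mult_luc[OF g] by blast
  ultimately show ?thesis using HD_Mop[OF g] by (auto simp: good_def)
qed

lemma good_T:
  assumes g: "g holomorphic_on ball 0 1" shows "good (Top g)"
proof -
  have dg: "deriv g holomorphic_on ball 0 1" by (rule holomorphic_deriv[OF g open_ball])
  have "lin (Top g)" unfolding lin_def
  proof (intro allI impI ballI)
    fix f1 f2 f :: "complex \<Rightarrow> complex" and a b z :: complex assume f1: "f1 \<in> HD" and f2: "f2 \<in> HD" and f: "f \<in> HD"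
      and e: "\<forall>z\<in>ball 0 1. f z = a * f1 z + b * f2 z" and z: "z \<in> ball 0 1"
    have i1: "(\<lambda>\<zeta>. f1 \<zeta> * deriv g \<zeta>) contour_integrable_on linepath 0 z"
      by (rule line_integrable[OF _ z]) (use f1 dg in \<open>simp add: HD_def holomorphic_on_mult\<close>)
    have i2: "(\<lambda>\<zeta>. f2 \<zeta> * deriv g \<zeta>) contour_integrable_on linepath 0 z"
      by (rule line_integrable[OF _ z]) (use f2 dg in \<open>simp add: HD_def holomorphic_on_mult\<close>)
    have pz: "path_image (linepath 0 z) \<subseteq> ball 0 1" using seg_ball[OF z] by simp
    have "Top g f z = contour_integral (linepath 0 z) (\<lambda>\<zeta>. a * (f1 \<zeta> * deriv g \<zeta>) + b * (f2 \<zeta> * deriv g \<zeta>))"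
      unfolding Top_def by (rule contour_integral_eq) (use pz e in \<open>auto simp: algebra_simps\<close>)
    also have "\<dots> = a * Top g f1 z + b * Top g f2 z"
      unfolding Top_def
      by (subst contour_integral_add)
         (auto intro!: contour_integrable_lmul i1 i2 simp: contour_integral_lmul i1 i2)
    finally show "Top g f z = a * Top g f1 z + b * Top g f2 z" .
  qed
  moreover have "lcont (Top g)" unfolding lcont_def Top_def
  proof (intro allI impI)
    fix F f assume "\<forall>n. F n \<in> HD" "f \<in> HD" "luc F f"
    then show "luc (\<lambda>n z. contour_integral (linepath 0 z) (\<lambda>\<zeta>. F n \<zeta> * deriv g \<zeta>))
                   (\<lambda>z. contour_integral (linepath 0 z) (\<lambda>\<zeta>. f \<zeta> * deriv g \<zeta>))"
      using int_luc[OF _ _ dg, of F f] by (simp add: HD_def)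
  qed
  ultimately show ?thesis using HD_Top[OF g] by (auto simp: good_def)
qed

lemma good_S:
  assumes g: "g holomorphic_on ball 0 1" shows "good (Sop g)"
proof -
  have "lin (Sop g)" unfolding lin_def
  proof (intro allI impI ballI)
    fix f1 f2 f :: "complex \<Rightarrow> complex" and a b z :: complex assume f1: "f1 \<in> HD" and f2: "f2 \<in> HD" and f: "f \<in> HD"
      and e: "\<forall>z\<in>ball 0 1. f z = a * f1 z + b * f2 z" and z: "z \<in> ball 0 1"
    have i1: "(\<lambda>\<zeta>. deriv f1 \<zeta> * g \<zeta>) contour_integrable_on linepath 0 z"
      by (rule line_integrable[OF _ z]) (use HD_deriv[OF f1] g in \<open>simp add: holomorphic_on_mult\<close>)
    have i2: "(\<lambda>\<zeta>. deriv f2 \<zeta> * g \<zeta>) contour_integrable_on linepath 0 z"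
      by (rule line_integrable[OF _ z]) (use HD_deriv[OF f2] g in \<open>simp add: holomorphic_on_mult\<close>)
    have pz: "path_image (linepath 0 z) \<subseteq> ball 0 1" using seg_ball[OF z] by simp
    have "Sop g f z = contour_integral (linepath 0 z) (\<lambda>\<zeta>. a * (deriv f1 \<zeta> * g \<zeta>) + b * (deriv f2 \<zeta> * g \<zeta>))"
      unfolding Sop_def
    proof (rule contour_integral_eq)
      fix x assume "x \<in> path_image (linepath 0 z)"
      then have x: "x \<in> ball 0 1" using pz by blast
      show "deriv f x * g x = a * (deriv f1 x * g x) + b * (deriv f2 x * g x)"
        using deriv_lin[OF f1 f2 f e x] by (simp add: algebra_simps)
    qed
    also have "\<dots> = a * Sop g f1 z + b * Sop g f2 z"
      unfolding Sop_def
      by (subst contour_integral_add)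
         (auto intro!: contour_integrable_lmul i1 i2 simp: contour_integral_lmul i1 i2)
    finally show "Sop g f z = a * Sop g f1 z + b * Sop g f2 z" .
  qed
  moreover have "lcont (Sop g)" unfolding lcont_def Sop_def
  proof (intro allI impI)
    fix F f assume F: "\<forall>n. F n \<in> HD" and f: "f \<in> HD" and L: "luc F f"
    have L': "luc (\<lambda>n. deriv (F n)) (deriv f)"
      by (rule deriv_luc[OF _ _ L]) (use F f in \<open>auto simp: HD_def\<close>)
    show "luc (\<lambda>n z. contour_integral (linepath 0 z) (\<lambda>\<zeta>. deriv (F n) \<zeta> * g \<zeta>))
                   (\<lambda>z. contour_integral (linepath 0 z) (\<lambda>\<zeta>. deriv f \<zeta> * g \<zeta>))"
      by (rule int_luc[OF _ _ g L']) (use F f HD_deriv in auto)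
  qed
  ultimately show ?thesis using HD_Sop[OF g] by (auto simp: good_def)
qed

lemma good_comp:
  assumes "good L1" "good L2" shows "good (L1 \<circ> L2)"
proof -
  have p1: "\<And>f. f \<in> HD \<Longrightarrow> L1 f \<in> HD" and p2: "\<And>f. f \<in> HD \<Longrightarrow> L2 f \<in> HD"
    using assms by (auto simp: good_def)
  have l1: "lin L1" and l2: "lin L2" and c1: "lcont L1" and c2: "lcont L2"
    using assms by (auto simp: good_def)
  have "lin (L1 \<circ> L2)" unfolding lin_def
  proof (intro allI impI ballI)
    fix f1 f2 f :: "complex \<Rightarrow> complex" and a b z :: complex assume f1: "f1 \<in> HD" and f2: "f2 \<in> HD" and f: "f \<in> HD"
      and e: "\<forall>z\<in>ball 0 1. f z = a * f1 z + b * f2 z" and z: "z \<in> ball 0 1"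
    have "\<And>w. w \<in> ball 0 1 \<Longrightarrow> L2 f w = a * L2 f1 w + b * L2 f2 w"
      by (rule linD[OF l2 f1 f2 f]) (use e in auto)
    then show "(L1 \<circ> L2) f z = a * (L1 \<circ> L2) f1 z + b * (L1 \<circ> L2) f2 z"
      unfolding o_def by (rule linD[OF l1 p2[OF f1] p2[OF f2] p2[OF f] _ z])
  qed
  moreover have "lcont (L1 \<circ> L2)" unfolding lcont_def o_def
  proof (intro allI impI)
    fix F f assume F: "\<forall>n. F n \<in> HD" and f: "f \<in> HD" and L: "luc F f"
    have "luc (\<lambda>n. L2 (F n)) (L2 f)" using c2 F f L by (simp add: lcont_def)
    then show "luc (\<lambda>n. L1 (L2 (F n))) (L1 (L2 f))"
      using c1 F f p2 by (simp add: lcont_def)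
  qed
  ultimately show ?thesis using p1 p2 by (auto simp: good_def)
qed

lemma good_add:
  assumes "good L1" "good L2" shows "good (\<lambda>f z. L1 f z + L2 f z)"
proof -
  have p1: "\<And>f. f \<in> HD \<Longrightarrow> L1 f \<in> HD" and p2: "\<And>f. f \<in> HD \<Longrightarrow> L2 f \<in> HD"
    using assms by (auto simp: good_def)
  have l1: "lin L1" and l2: "lin L2" and c1: "lcont L1" and c2: "lcont L2"
    using assms by (auto simp: good_def)
  have "(\<lambda>z. L1 f z + L2 f z) \<in> HD" if "f \<in> HD" for f
    using p1[OF that] p2[OF that] by (simp add: HD_def holomorphic_on_add)
  moreover have "lin (\<lambda>f z. L1 f z + L2 f z)" unfolding lin_def
  proof (intro allI impI ballI)
    fix f1 f2 f :: "complex \<Rightarrow> complex" and a b z :: complex assume f1: "f1 \<in> HD" and f2: "f2 \<in> HD" and f: "f \<in> HD"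
      and e: "\<forall>z\<in>ball 0 1. f z = a * f1 z + b * f2 z" and z: "z \<in> ball 0 1"
    have "L1 f z = a * L1 f1 z + b * L1 f2 z" by (rule linD[OF l1 f1 f2 f _ z]) (use e in auto)
    moreover have "L2 f z = a * L2 f1 z + b * L2 f2 z" by (rule linD[OF l2 f1 f2 f _ z]) (use e in auto)
    ultimately show "L1 f z + L2 f z = a * (L1 f1 z + L2 f1 z) + b * (L1 f2 z + L2 f2 z)"
      by (simp add: algebra_simps)
  qed
  moreover have "lcont (\<lambda>f z. L1 f z + L2 f z)" unfolding lcont_def
  proof (intro allI impI)
    fix F f assume F: "\<forall>n. F n \<in> HD" and f: "f \<in> HD" and L: "luc F f"
    have a: "luc (\<lambda>n. L1 (F n)) (L1 f)" using c1 F f L by (simp add: lcont_def)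
    have b: "luc (\<lambda>n. L2 (F n)) (L2 f)" using c2 F f L by (simp add: lcont_def)
    show "luc (\<lambda>n z. L1 (F n) z + L2 (F n) z) (\<lambda>z. L1 f z + L2 f z)"
      using a b unfolding luc_def by (auto intro: uniform_limit_add)
  qed
  ultimately show ?thesis by (auto simp: good_def)
qed

lemma good_scale:
  assumes "good L" shows "good (\<lambda>f z. c * L f z)"
proof -
  have p: "\<And>f. f \<in> HD \<Longrightarrow> L f \<in> HD" and l: "lin L" and cc: "lcont L"
    using assms by (auto simp: good_def)
  have "(\<lambda>z. c * L f z) \<in> HD" if "f \<in> HD" for f
    using p[OF that] by (simp add: HD_def holomorphic_on_mult holomorphic_on_const)
  moreover have "lin (\<lambda>f z. c * L f z)" unfolding lin_def
  proof (intro allI impI ballI)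
    fix f1 f2 f :: "complex \<Rightarrow> complex" and a b z :: complex assume f1: "f1 \<in> HD" and f2: "f2 \<in> HD" and f: "f \<in> HD"
      and e: "\<forall>z\<in>ball 0 1. f z = a * f1 z + b * f2 z" and z: "z \<in> ball 0 1"
    have "L f z = a * L f1 z + b * L f2 z" by (rule linD[OF l f1 f2 f _ z]) (use e in auto)
    then show "c * L f z = a * (c * L f1 z) + b * (c * L f2 z)"
      by (simp add: algebra_simps)
  qed
  moreover have "lcont (\<lambda>f z. c * L f z)" unfolding lcont_def
  proof (intro allI impI)
    fix F f assume F: "\<forall>n. F n \<in> HD" and f: "f \<in> HD" and L: "luc F f"
    have a: "luc (\<lambda>n. L (F n)) (L f)" using cc F f L by (simp add: lcont_def)
    have "luc (\<lambda>n z. L (F n) z * c) (\<lambda>z. L f z * c)"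
      by (rule mult_luc[OF _ a]) (simp add: holomorphic_on_const)
    then show "luc (\<lambda>n z. c * L (F n) z) (\<lambda>z. c * L f z)"
      by (simp add: mult.commute)
  qed
  ultimately show ?thesis by (auto simp: good_def)
qed

lemma gops_good:
  assumes g: "g holomorphic_on ball 0 1" and L: "L \<in> gops g"
  shows "good L"
  using L
proof (induction rule: gops.induct)
  case gM then show ?case by (rule good_M[OF g])
next
  case gS then show ?case by (rule good_S[OF g])
next
  case gT then show ?case by (rule good_T[OF g])
next
  case (gcomp L1 L2) then show ?case by (intro good_comp)
next
  case (gadd L1 L2) then show ?case by (intro good_add)
next
  case (gscale L c) then show ?case by (intro good_scale)
qed

lemma lin_zero:
  assumes "lin L" "f \<in> HD" "\<And>z. z \<in> ball 0 1 \<Longrightarrow> f z = 0" "z \<in> ball 0 1"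
  shows "L f z = 0"
  using linD[OF assms(1,2,2,2), of 0 0 z] assms(3,4) by simp

lemma lin_sum:
  assumes l: "lin L" and I: "finite I"
  shows "(\<forall>i\<in>I. \<phi> i \<in> HD) \<Longrightarrow> f \<in> HD \<Longrightarrow> (\<forall>z\<in>ball 0 1. f z = (\<Sum>i\<in>I. c i * \<phi> i z))
     \<Longrightarrow> z \<in> ball 0 1 \<Longrightarrow> L f z = (\<Sum>i\<in>I. c i * L (\<phi> i) z)"
  using I
proof (induction I arbitrary: f z rule: finite_induct)
  case empty
  then show ?case using lin_zero[OF l, of f z] by simp
next
  case (insert j I)
  define f' where "f' = (\<lambda>w. \<Sum>i\<in>I. c i * \<phi> i w)"
  have f'HD: "f' \<in> HD" unfolding f'_def HD_def mem_Collect_eq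
    by (intro holomorphic_on_sum holomorphic_on_mult holomorphic_on_const)
       (use insert.prems(1) in \<open>auto simp: HD_def\<close>)
  have IH: "L f' z = (\<Sum>i\<in>I. c i * L (\<phi> i) z)"
    by (rule insert.IH) (use insert.prems f'HD in \<open>auto simp: f'_def\<close>)
  have "L f z = c j * L (\<phi> j) z + 1 * L f' z"
    by (rule linD[OF l _ f'HD insert.prems(2) _ insert.prems(4)])
       (use insert.prems(1,3) insert.hyps in \<open>auto simp: f'_def\<close>)
  then show ?case using IH insert.hyps by simp
qed



lemma taylor_luc:
  assumes f: "f holomorphic_on ball 0 1"
  shows "luc (\<lambda>N w. \<Sum>i<N. (deriv ^^ i) f 0 / fact i * w ^ i) f"
  unfolding luc_def
proof (intro allI impI)
  fix r :: real assume r: "r < 1"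
  define r0 where "r0 = max r 0"
  have r0: "r0 < 1" "0 \<le> r0" "r \<le> r0" using r by (auto simp: r0_def)
  define R where "R = (1 + r0) / 2"
  have R: "0 < R" "r0 < R" "R < 1" using r0 unfolding R_def by (auto simp: field_simps)
  obtain B where B: "B > 0" "\<And>x. x \<in> cball 0 R \<Longrightarrow> norm (f x) \<le> B"
    using bound_on_cball[OF f R(3)] by blast
  have subR: "ball 0 R \<subseteq> ball (0::complex) 1" "cball 0 R \<subseteq> ball (0::complex) 1" using R by auto
  have fR: "f holomorphic_on ball 0 R" by (rule holomorphic_on_subset[OF f subR(1)])
  have fcR: "continuous_on (cball 0 R) f"
    by (rule holomorphic_on_imp_continuous_on, rule holomorphic_on_subset[OF f subR(2)])
  have coef: "norm ((deriv ^^ i) f 0) \<le> fact i * B / R ^ i" for i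
  proof (rule Cauchy_inequality[OF fR fcR R(1)])
    fix x :: complex assume "norm (0 - x) = R"
    then have "x \<in> cball 0 R" by simp
    then show "norm (f x) \<le> B" by (rule B(2))
  qed
  define M where "M = (\<lambda>i. B * (r0 / R) ^ i)"
  have bound: "norm ((deriv ^^ i) f 0 / fact i * w ^ i) \<le> M i" if w: "w \<in> cball 0 r" for i w
  proof -
    have nw: "norm w \<le> r0" using w r0 by simp
    have "norm ((deriv ^^ i) f 0 / fact i * w ^ i) = norm ((deriv ^^ i) f 0) / fact i * norm w ^ i"
      by (simp add: norm_mult norm_divide norm_power)
    also have "\<dots> \<le> (fact i * B / R ^ i) / fact i * r0 ^ i"
      by (intro mult_mono divide_right_mono coef power_mono) (use nw B(1) R(1) in auto)
    also have "\<dots> = M i" by (simp add: M_def power_divide)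
    finally show ?thesis .
  qed
  have sM: "summable M" unfolding M_def
    by (rule summable_mult, rule summable_geometric) (use r0 R in auto)
  have ul: "uniform_limit (cball 0 r) (\<lambda>N w. \<Sum>i<N. (deriv ^^ i) f 0 / fact i * w ^ i)
              (\<lambda>w. \<Sum>i. (deriv ^^ i) f 0 / fact i * w ^ i) sequentially"
    by (rule Weierstrass_m_test[OF bound sM])
  have eq: "(\<Sum>i. (deriv ^^ i) f 0 / fact i * w ^ i) = f w" if "w \<in> cball 0 r" for w
  proof -
    have "w \<in> ball 0 1" using that r by auto
    from holomorphic_power_series[OF f this] show ?thesis by (simp add: sums_iff)
  qed
  show "uniform_limit (cball 0 r) (\<lambda>N w. \<Sum>i<N. (deriv ^^ i) f 0 / fact i * w ^ i) f sequentially"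
    using ul uniform_limit_cong'[of "cball 0 r" "\<lambda>N w. \<Sum>i<N. (deriv ^^ i) f 0 / fact i * w ^ i"
        "\<lambda>N w. \<Sum>i<N. (deriv ^^ i) f 0 / fact i * w ^ i" "\<lambda>w. \<Sum>i. (deriv ^^ i) f 0 / fact i * w ^ i" f sequentially]
      eq by blast
qed

lemma kill_monos:
  assumes gd: "good L" and K: "\<And>l z. l \<ge> 1 \<Longrightarrow> z \<in> ball 0 1 \<Longrightarrow> L (\<lambda>w. w ^ l) z = 0"
    and f: "f \<in> HD" and z: "z \<in> ball 0 1"
  shows "L f z = f 0 * L (\<lambda>w. 1) z"
proof -
  have l: "lin L" and c: "lcont L" using gd by (auto simp: good_def)
  define a where "a = (\<lambda>i. (deriv ^^ i) f 0 / fact i)"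
  define p where "p = (\<lambda>N w. \<Sum>i<N. a i * w ^ i)"
  have pHD: "p N \<in> HD" for N unfolding p_def HD_def mem_Collect_eq
    by (intro holomorphic_on_sum holomorphic_on_mult holomorphic_on_const holomorphic_on_power holomorphic_on_ident)
  have mono: "(\<lambda>w::complex. w ^ i) \<in> HD" for i
    unfolding HD_def mem_Collect_eq by (intro holomorphic_on_power holomorphic_on_ident)
  have Lp: "L (p (Suc N)) z = f 0 * L (\<lambda>w. 1) z" for N
  proof -
    have "L (p (Suc N)) z = (\<Sum>i<Suc N. a i * L (\<lambda>w. w ^ i) z)"
      using lin_sum[OF l finite_lessThan[of "Suc N"], of "\<lambda>i w. w ^ i" "p (Suc N)" a z] pHD[of "Suc N"] mono z
      unfolding p_def by blast
    also have "\<dots> = a 0 * L (\<lambda>w. w ^ 0) z + (\<Sum>i<N. a (Suc i) * L (\<lambda>w. w ^ Suc i) z)"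
      by (rule sum.lessThan_Suc_shift)
    also have "(\<Sum>i<N. a (Suc i) * L (\<lambda>w. w ^ Suc i) z) = 0"
    proof -
      have "L (\<lambda>w. w ^ Suc i) z = 0" for i by (rule K[OF _ z]) simp
      then show ?thesis by (simp del: power_Suc)
    qed
    finally show ?thesis by (simp add: a_def)
  qed
  have "luc p f" unfolding p_def a_def using taylor_luc f by (simp add: HD_def)
  then have "luc (\<lambda>N. L (p N)) (L f)" using c pHD f by (simp add: lcont_def)
  then have "uniform_limit (cball 0 (norm z)) (\<lambda>N. L (p N)) (L f) sequentially"
    using z by (simp add: luc_def)
  then have t: "(\<lambda>N. L (p N) z) \<longlonglongrightarrow> L f z"
    by (rule tendsto_uniform_limitI) simp
  have "(\<lambda>N. L (p (Suc N)) z) \<longlonglongrightarrow> L f z" using t by (rule LIMSEQ_Suc)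
  then have "(\<lambda>N. f 0 * L (\<lambda>w. 1) z) \<longlonglongrightarrow> L f z" using Lp by simp
  then show ?thesis using LIMSEQ_const_iff by metis
qed



lemma line_int_exact:
  assumes G: "\<And>x. x \<in> ball 0 1 \<Longrightarrow> (G has_field_derivative h x) (at x)" and z: "z \<in> ball 0 1"
  shows "contour_integral (linepath 0 z) h = G z - G 0"
proof -
  have pz: "path_image (linepath 0 z) \<subseteq> ball 0 1" using seg_ball[OF z] by simp
  have G': "\<And>x. x \<in> ball 0 1 \<Longrightarrow> (G has_field_derivative h x) (at x within ball 0 1)"
    using G has_field_derivative_at_within by blast
  have "(h has_contour_integral (G (pathfinish (linepath 0 z)) - G (pathstart (linepath 0 z)))) (linepath 0 z)"
    by (rule contour_integral_primitive[OF G' valid_path_linepath pz])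
  then show ?thesis by (simp add: contour_integral_unique)
qed

lemma pow_prim:
  assumes g: "g holomorphic_on ball 0 1" and x: "x \<in> ball 0 1"
  shows "((\<lambda>w. g w ^ Suc n / of_nat (Suc n)) has_field_derivative (g x ^ n * deriv g x)) (at x)"
proof -
  have dg: "(g has_field_derivative deriv g x) (at x)" by (rule holomorphic_derivI[OF g open_ball x])
  have nz: "(of_nat (Suc n) :: complex) \<noteq> 0" by (simp only: of_nat_eq_0_iff nat.distinct(2) not_False_eq_True)
  show ?thesis
  proof (rule DERIV_cong[OF DERIV_cdivide[OF DERIV_power_Suc[OF dg, of n], of "of_nat (Suc n)"]])
    show "(1 + of_nat n) * (deriv g x * g x ^ n) / of_nat (Suc n) = g x ^ n * deriv g x"
      using nz by (simp add: field_simps)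
  qed
qed

lemma pow_HD: "g holomorphic_on ball 0 1 \<Longrightarrow> (\<lambda>w. g w ^ n) \<in> HD"
  unfolding HD_def mem_Collect_eq by (rule holomorphic_on_power)

lemma Top_pow:
  assumes g: "g holomorphic_on ball 0 1" and z: "z \<in> ball 0 1"
  shows "Top g (\<lambda>w. g w ^ n) z = (g z ^ Suc n - g 0 ^ Suc n) / of_nat (Suc n)"
proof -
  have "Top g (\<lambda>w. g w ^ n) z = g z ^ Suc n / of_nat (Suc n) - g 0 ^ Suc n / of_nat (Suc n)"
    unfolding Top_def by (rule line_int_exact[OF pow_prim[OF g] z])
  then show ?thesis by (simp add: diff_divide_distrib)
qed

lemma Sop_pow:
  assumes g: "g holomorphic_on ball 0 1" and z: "z \<in> ball 0 1"
  shows "Sop g (\<lambda>w. g w ^ n) z = of_nat n * ((g z ^ Suc n - g 0 ^ Suc n) / of_nat (Suc n))"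
proof -
  have pz: "path_image (linepath 0 z) \<subseteq> ball 0 1" using seg_ball[OF z] by simp
  have "Sop g (\<lambda>w. g w ^ n) z = contour_integral (linepath 0 z) (\<lambda>\<zeta>. of_nat n * (g \<zeta> ^ n * deriv g \<zeta>))"
    unfolding Sop_def
  proof (rule contour_integral_eq)
    fix x assume "x \<in> path_image (linepath 0 z)"
    then have x: "x \<in> ball 0 1" using pz by blast
    have dg: "(g has_field_derivative deriv g x) (at x)" by (rule holomorphic_derivI[OF g open_ball x])
    have "deriv (\<lambda>w. g w ^ n) x = of_nat n * (deriv g x * g x ^ (n - Suc 0))"
      by (rule DERIV_imp_deriv[OF DERIV_power[OF dg]])
    then show "deriv (\<lambda>w. g w ^ n) x * g x = of_nat n * (g x ^ n * deriv g x)"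
      by (cases n) (simp_all add: algebra_simps)
  qed
  also have "\<dots> = of_nat n * (g z ^ Suc n / of_nat (Suc n)) - of_nat n * (g 0 ^ Suc n / of_nat (Suc n))"
    by (rule line_int_exact[OF DERIV_cmult[OF pow_prim[OF g]] z])
  finally show ?thesis by (simp add: diff_divide_distrib algebra_simps)
qed

lemma poly_sum_bound:
  fixes p :: "complex poly"
  assumes "degree p \<le> D"
  shows "poly p x = (\<Sum>i\<le>D. coeff p i * x ^ i)"
proof -
  have "poly p x = (\<Sum>i\<le>degree p. coeff p i * x ^ i)" by (rule poly_altdef)
  also have "\<dots> = (\<Sum>i\<le>D. coeff p i * x ^ i)"
    by (rule sum.mono_neutral_left) (use assms in \<open>auto simp: coeff_eq_0\<close>)
  finally show ?thesis .
qed

lemma brep: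
  assumes g: "g holomorphic_on ball 0 1" and L: "L \<in> gops g"
  shows "\<forall>n. \<exists>G. \<forall>z\<in>ball 0 1. L (\<lambda>w. g w ^ n) z = poly G (g z)"
  using L
proof (induction rule: gops.induct)
  case gM
  show ?case
  proof
    fix n show "\<exists>G. \<forall>z\<in>ball 0 1. Mop g (\<lambda>w. g w ^ n) z = poly G (g z)"
      by (rule exI[of _ "monom 1 (Suc n)"]) (simp add: Mop_def poly_monom)
  qed
next
  case gT
  show ?case
  proof
    fix n show "\<exists>G. \<forall>z\<in>ball 0 1. Top g (\<lambda>w. g w ^ n) z = poly G (g z)"
      by (rule exI[of _ "smult (1 / of_nat (Suc n)) (monom 1 (Suc n) - [:g 0 ^ Suc n:])"])
         (simp add: Top_pow[OF g] poly_monom)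
  qed
next
  case gS
  show ?case
  proof
    fix n show "\<exists>G. \<forall>z\<in>ball 0 1. Sop g (\<lambda>w. g w ^ n) z = poly G (g z)"
      by (rule exI[of _ "smult (of_nat n / of_nat (Suc n)) (monom 1 (Suc n) - [:g 0 ^ Suc n:])"])
         (simp add: Sop_pow[OF g] poly_monom)
  qed
next
  case (gcomp L1 L2)
  obtain G1 where G1: "\<And>n z. z \<in> ball 0 1 \<Longrightarrow> L1 (\<lambda>w. g w ^ n) z = poly (G1 n) (g z)"
    using gcomp.IH(1) by metis
  have gd1: "good L1" and gd2: "good L2" using gops_good[OF g] gcomp.hyps by auto
  show ?case
  proof
    fix n
    obtain G2 where G2: "\<And>z. z \<in> ball 0 1 \<Longrightarrow> L2 (\<lambda>w. g w ^ n) z = poly G2 (g z)"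
      using gcomp.IH(2) by metis
    have HD2: "L2 (\<lambda>w. g w ^ n) \<in> HD" using gd2 pow_HD[OF g] by (auto simp: good_def)
    have "(L1 \<circ> L2) (\<lambda>w. g w ^ n) z = poly (\<Sum>i\<le>degree G2. smult (coeff G2 i) (G1 i)) (g z)"
      if z: "z \<in> ball 0 1" for z
    proof -
      have "(L1 \<circ> L2) (\<lambda>w. g w ^ n) z = (\<Sum>i\<le>degree G2. coeff G2 i * L1 (\<lambda>w. g w ^ i) z)"
        unfolding o_def
        by (rule lin_sum[where \<phi>="\<lambda>i w. g w ^ i"])
           (use gd1 HD2 pow_HD[OF g] z G2 in \<open>auto simp: good_def poly_altdef\<close>)
      also have "\<dots> = poly (\<Sum>i\<le>degree G2. smult (coeff G2 i) (G1 i)) (g z)"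
        by (simp add: poly_sum G1[OF z])
      finally show ?thesis .
    qed
    then show "\<exists>G. \<forall>z\<in>ball 0 1. (L1 \<circ> L2) (\<lambda>w. g w ^ n) z = poly G (g z)" by blast
  qed
next
  case (gadd L1 L2)
  show ?case
  proof
    fix n
    obtain G1 where G1: "\<And>z. z \<in> ball 0 1 \<Longrightarrow> L1 (\<lambda>w. g w ^ n) z = poly G1 (g z)"
      using gadd.IH(1) by metis
    obtain G2 where G2: "\<And>z. z \<in> ball 0 1 \<Longrightarrow> L2 (\<lambda>w. g w ^ n) z = poly G2 (g z)"
      using gadd.IH(2) by metis
    show "\<exists>G. \<forall>z\<in>ball 0 1. L1 (\<lambda>w. g w ^ n) z + L2 (\<lambda>w. g w ^ n) z = poly G (g z)"
      by (rule exI[of _ "G1 + G2"]) (simp add: G1 G2)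
  qed
next
  case (gscale L c)
  show ?case
  proof
    fix n
    obtain G1 where G1: "\<And>z. z \<in> ball 0 1 \<Longrightarrow> L (\<lambda>w. g w ^ n) z = poly G1 (g z)"
      using gscale.IH by metis
    show "\<exists>G. \<forall>z\<in>ball 0 1. c * L (\<lambda>w. g w ^ n) z = poly G (g z)"
      by (rule exI[of _ "smult c G1"]) (simp add: G1)
  qed
qed



definition ratf :: "(nat \<Rightarrow> complex) \<Rightarrow> bool" where
  "ratf c \<longleftrightarrow> (\<exists>p q. (\<forall>m::nat. poly q (of_nat m) \<noteq> 0) \<and> (\<forall>m. c m = poly p (of_nat m) / poly q (of_nat m)))"

lemma ratf_const: "ratf (\<lambda>n. a)"
  unfolding ratf_def by (rule exI[of _ "[:a:]"], rule exI[of _ 1]) simp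

lemma ratf_add: assumes "ratf c1" "ratf c2" shows "ratf (\<lambda>n. c1 n + c2 n)"
proof -
  obtain p1 q1 where 1: "\<forall>m::nat. poly q1 (of_nat m) \<noteq> 0" "\<forall>m. c1 m = poly p1 (of_nat m) / poly q1 (of_nat m)"
    using assms(1) unfolding ratf_def by blast
  obtain p2 q2 where 2: "\<forall>m::nat. poly q2 (of_nat m) \<noteq> 0" "\<forall>m. c2 m = poly p2 (of_nat m) / poly q2 (of_nat m)"
    using assms(2) unfolding ratf_def by blast
  show ?thesis unfolding ratf_def
    by (rule exI[of _ "p1 * q2 + p2 * q1"], rule exI[of _ "q1 * q2"]) (use 1 2 in \<open>simp add: field_simps\<close>)
qed

lemma ratf_mult: assumes "ratf c1" "ratf c2" shows "ratf (\<lambda>n. c1 n * c2 n)"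
proof -
  obtain p1 q1 where 1: "\<forall>m::nat. poly q1 (of_nat m) \<noteq> 0" "\<forall>m. c1 m = poly p1 (of_nat m) / poly q1 (of_nat m)"
    using assms(1) unfolding ratf_def by blast
  obtain p2 q2 where 2: "\<forall>m::nat. poly q2 (of_nat m) \<noteq> 0" "\<forall>m. c2 m = poly p2 (of_nat m) / poly q2 (of_nat m)"
    using assms(2) unfolding ratf_def by blast
  show ?thesis unfolding ratf_def
    by (rule exI[of _ "p1 * p2"], rule exI[of _ "q1 * q2"]) (use 1 2 in simp)
qed

lemma ratf_shift: assumes "ratf c" shows "ratf (\<lambda>n. c (n + k))"
proof -
  obtain p q where 1: "\<forall>m::nat. poly q (of_nat m) \<noteq> 0" "\<forall>m. c m = poly p (of_nat m) / poly q (of_nat m)"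
    using assms(1) unfolding ratf_def by blast
  have e: "poly (r \<circ>\<^sub>p [:of_nat k, 1:]) (of_nat m) = poly r (of_nat (m + k))" for r :: "complex poly" and m
    by (simp add: poly_pcompose add.commute)
  show ?thesis unfolding ratf_def
    by (rule exI[of _ "p \<circ>\<^sub>p [:of_nat k, 1:]"], rule exI[of _ "q \<circ>\<^sub>p [:of_nat k, 1:]"]) (use 1 in \<open>simp only: e, simp\<close>)
qed

lemma ratf_inv: "ratf (\<lambda>n. 1 / of_nat (Suc n))"
proof -
  have e: "poly [:1, 1:] (of_nat m) = (of_nat (Suc m) :: complex)" for m by simp
  show ?thesis unfolding ratf_def
    by (rule exI[of _ 1], rule exI[of _ "[:1, 1:]"]) (simp only: e poly_1 of_nat_eq_0_iff nat.distinct(2) not_False_eq_True simp_thms)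
qed

lemma ratf_nat: "ratf (\<lambda>n. of_nat n)"
  unfolding ratf_def by (rule exI[of _ "[:0, 1:]"], rule exI[of _ 1]) simp

lemma ratf_if: "ratf c \<Longrightarrow> ratf (\<lambda>n. if P then c n else 0)"
  by (cases P) (simp_all add: ratf_const)

lemma ratf_sum: "finite I \<Longrightarrow> (\<And>i. i \<in> I \<Longrightarrow> ratf (c i)) \<Longrightarrow> ratf (\<lambda>n. \<Sum>i\<in>I. c i n)"
proof (induction I rule: finite_induct)
  case empty then show ?case by (simp add: ratf_const)
next
  case (insert j I)
  then show ?case by (simp add: ratf_add)
qed

lemma ratf_zero:
  assumes "ratf c" "\<And>m. m \<ge> 1 \<Longrightarrow> c m = 0"
  shows "c 0 = 0"
proof -
  obtain p q where 1: "\<forall>m::nat. poly q (of_nat m) \<noteq> 0" "\<forall>m. c m = poly p (of_nat m) / poly q (of_nat m)"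
    using assms(1) unfolding ratf_def by blast
  have z: "poly p (of_nat m) = 0" if "m \<ge> 1" for m
    using assms(2)[OF that] 1 by (metis divide_eq_0_iff)
  have "p = 0"
  proof (rule ccontr)
    assume "p \<noteq> 0"
    then have fin: "finite {x. poly p x = 0}" by (rule poly_roots_finite)
    have "finite ((of_nat :: nat \<Rightarrow> complex) -` {x. poly p x = 0})"
      by (rule finite_vimageI[OF fin]) (simp add: inj_on_def)
    then obtain k where k: "\<forall>n \<in> (of_nat :: nat \<Rightarrow> complex) -` {x. poly p x = 0}. n < k"
      by (auto simp: finite_nat_set_iff_bounded)
    have "Suc k \<in> (of_nat :: nat \<Rightarrow> complex) -` {x. poly p x = 0}"
      using z[of "Suc k"] by (simp del: of_nat_Suc)
    then have "Suc k < k" using k by blast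
    then show False by simp
  qed
  then show ?thesis using 1 by simp
qed

lemma coeff_lin: "coeff [:0, a:] e = (if e = 1 then a else 0)"
  by (cases e) (auto simp: coeff_pCons split: nat.split)

definition qrep :: "(complex \<Rightarrow> complex) \<Rightarrow> op \<Rightarrow> bool" where
  "qrep g L \<longleftrightarrow> (\<exists>Q D. (\<forall>n. degree (Q n) \<le> D) \<and> (\<forall>e. ratf (\<lambda>n. coeff (Q n) e)) \<and>
      (\<forall>n. \<forall>z\<in>ball 0 1. L (\<lambda>w. g w ^ n) z = poly (Q n) (g z) * g z ^ n))"

lemma qrep:
  assumes g: "g holomorphic_on ball 0 1" and g0: "g 0 = 0" and L: "L \<in> gops g"
  shows "qrep g L"
  using L
proof (induction rule: gops.induct)
  case gM
  show ?case unfolding qrep_def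
    by (rule exI[of _ "\<lambda>n. [:0, 1:]"], rule exI[of _ 1]) (auto simp: Mop_def ratf_const)
next
  case gT
  show ?case unfolding qrep_def
  proof (rule exI[of _ "\<lambda>n. [:0, 1 / of_nat (Suc n):]"], rule exI[of _ 1], intro conjI allI ballI)
    fix n :: nat and e :: nat
    show "degree [:0, 1 / of_nat (Suc n):] \<le> 1" by simp
    show "ratf (\<lambda>n. coeff [:0, 1 / of_nat (Suc n):] e)"
      unfolding coeff_lin by (rule ratf_if[OF ratf_inv])
  next
    fix n :: nat and z :: complex assume z: "z \<in> ball 0 1"
    show "Top g (\<lambda>w. g w ^ n) z = poly [:0, 1 / of_nat (Suc n):] (g z) * g z ^ n"
      by (simp add: Top_pow[OF g z] g0 algebra_simps)
  qed
next
  case gS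
  show ?case unfolding qrep_def
  proof (rule exI[of _ "\<lambda>n. [:0, of_nat n * (1 / of_nat (Suc n)):]"], rule exI[of _ 1], intro conjI allI ballI)
    fix n :: nat and e :: nat
    show "degree [:0, of_nat n * (1 / of_nat (Suc n)):] \<le> 1" by simp
    show "ratf (\<lambda>n. coeff [:0, of_nat n * (1 / of_nat (Suc n)):] e)"
      unfolding coeff_lin by (rule ratf_if[OF ratf_mult[OF ratf_nat ratf_inv]])
  next
    fix n :: nat and z :: complex assume z: "z \<in> ball 0 1"
    show "Sop g (\<lambda>w. g w ^ n) z = poly [:0, of_nat n * (1 / of_nat (Suc n)):] (g z) * g z ^ n"
      by (simp add: Sop_pow[OF g z] g0 algebra_simps)
  qed
next
  case (gcomp L1 L2)
  obtain Q1 D1 where Q1: "\<And>n. degree (Q1 n) \<le> D1" "\<And>e. ratf (\<lambda>n. coeff (Q1 n) e)"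
    "\<And>n z. z \<in> ball 0 1 \<Longrightarrow> L1 (\<lambda>w. g w ^ n) z = poly (Q1 n) (g z) * g z ^ n"
    using gcomp.IH(1) unfolding qrep_def by blast
  obtain Q2 D2 where Q2: "\<And>n. degree (Q2 n) \<le> D2" "\<And>e. ratf (\<lambda>n. coeff (Q2 n) e)"
    "\<And>n z. z \<in> ball 0 1 \<Longrightarrow> L2 (\<lambda>w. g w ^ n) z = poly (Q2 n) (g z) * g z ^ n"
    using gcomp.IH(2) unfolding qrep_def by blast
  have gd1: "good L1" and gd2: "good L2" using gops_good[OF g] gcomp.hyps by auto
  define Q where "Q = (\<lambda>n. \<Sum>e\<le>D2. smult (coeff (Q2 n) e) (monom 1 e * Q1 (n + e)))"
  have degQ: "degree (Q n) \<le> D2 + D1" for n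
    unfolding Q_def
  proof (rule degree_sum_le)
    fix e assume e: "e \<in> {..D2}"
    have "degree (smult (coeff (Q2 n) e) (monom 1 e * Q1 (n + e))) \<le> degree (monom (1::complex) e * Q1 (n + e))"
      by (rule degree_smult_le)
    also have "\<dots> \<le> degree (monom (1::complex) e) + degree (Q1 (n + e))" by (rule degree_mult_le)
    also have "\<dots> \<le> e + D1" using degree_monom_le[of "1::complex" e] Q1(1)[of "n+e"] by linarith
    also have "\<dots> \<le> D2 + D1" using e by simp
    finally show "degree (smult (coeff (Q2 n) e) (monom 1 e * Q1 (n + e))) \<le> D2 + D1" .
  qed simp
  have ratQ: "ratf (\<lambda>n. coeff (Q n) d)" for d
  proof -
    have "coeff (Q n) d = (\<Sum>e\<le>D2. coeff (Q2 n) e * (if d < e then 0 else coeff (Q1 (n + e)) (d - e)))" for n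
      unfolding Q_def by (simp add: coeff_sum coeff_monom_mult cong: if_cong)
    moreover have "ratf (\<lambda>n. \<Sum>e\<le>D2. coeff (Q2 n) e * (if d < e then 0 else coeff (Q1 (n + e)) (d - e)))"
    proof (rule ratf_sum)
      fix e assume "e \<in> {..D2}"
      have "ratf (\<lambda>n. if \<not> d < e then coeff (Q1 (n + e)) (d - e) else 0)"
        by (rule ratf_if, rule ratf_shift[OF Q1(2)])
      then have "ratf (\<lambda>n. if d < e then 0 else coeff (Q1 (n + e)) (d - e))"
        by (cases "d < e") simp_all
      then show "ratf (\<lambda>n. coeff (Q2 n) e * (if d < e then 0 else coeff (Q1 (n + e)) (d - e)))"
        by (rule ratf_mult[OF Q2(2)])
    qed simp
    ultimately show ?thesis by simp
  qed
  have val: "(L1 \<circ> L2) (\<lambda>w. g w ^ n) z = poly (Q n) (g z) * g z ^ n" if z: "z \<in> ball 0 1" for n z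
  proof -
    have HD2: "L2 (\<lambda>w. g w ^ n) \<in> HD" using gd2 pow_HD[OF g] by (auto simp: good_def)
    have e2: "\<forall>w\<in>ball 0 1. L2 (\<lambda>w. g w ^ n) w = (\<Sum>e\<le>D2. coeff (Q2 n) e * g w ^ (n + e))"
    proof
      fix w :: complex assume w: "w \<in> ball 0 1"
      have "L2 (\<lambda>w. g w ^ n) w = (\<Sum>e\<le>D2. coeff (Q2 n) e * g w ^ e) * g w ^ n"
        by (simp add: Q2(3)[OF w] poly_sum_bound[OF Q2(1)])
      also have "\<dots> = (\<Sum>e\<le>D2. coeff (Q2 n) e * g w ^ (n + e))"
        by (simp add: sum_distrib_left sum_distrib_right power_add mult_ac)
      finally show "L2 (\<lambda>w. g w ^ n) w = (\<Sum>e\<le>D2. coeff (Q2 n) e * g w ^ (n + e))" .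
    qed
    have "(L1 \<circ> L2) (\<lambda>w. g w ^ n) z = (\<Sum>e\<le>D2. coeff (Q2 n) e * L1 (\<lambda>w. g w ^ (n + e)) z)"
      unfolding o_def
      by (rule lin_sum[where \<phi>="\<lambda>e w. g w ^ (n + e)"]) (use gd1 HD2 pow_HD[OF g] z e2 in \<open>auto simp: good_def\<close>)
    also have "\<dots> = (\<Sum>e\<le>D2. coeff (Q2 n) e * (poly (Q1 (n + e)) (g z) * g z ^ (n + e)))"
      by (simp add: Q1(3)[OF z])
    also have "\<dots> = poly (Q n) (g z) * g z ^ n"
      unfolding Q_def by (simp add: poly_sum poly_monom sum_distrib_left sum_distrib_right power_add mult_ac)
    finally show ?thesis .
  qed
  show ?case unfolding qrep_def using degQ ratQ val by blast
next
  case (gadd L1 L2)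
  obtain Q1 D1 where Q1: "\<And>n. degree (Q1 n) \<le> D1" "\<And>e. ratf (\<lambda>n. coeff (Q1 n) e)"
    "\<And>n z. z \<in> ball 0 1 \<Longrightarrow> L1 (\<lambda>w. g w ^ n) z = poly (Q1 n) (g z) * g z ^ n"
    using gadd.IH(1) unfolding qrep_def by blast
  obtain Q2 D2 where Q2: "\<And>n. degree (Q2 n) \<le> D2" "\<And>e. ratf (\<lambda>n. coeff (Q2 n) e)"
    "\<And>n z. z \<in> ball 0 1 \<Longrightarrow> L2 (\<lambda>w. g w ^ n) z = poly (Q2 n) (g z) * g z ^ n"
    using gadd.IH(2) unfolding qrep_def by blast
  have a: "degree (Q1 n + Q2 n) \<le> max D1 D2" for n
    using degree_add_le[of "Q1 n" "max D1 D2" "Q2 n"] Q1(1)[of n] Q2(1)[of n] by simp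
  have b: "ratf (\<lambda>n. coeff (Q1 n + Q2 n) e)" for e
    by (simp add: ratf_add Q1(2) Q2(2))
  have c: "L1 (\<lambda>w. g w ^ n) z + L2 (\<lambda>w. g w ^ n) z = poly (Q1 n + Q2 n) (g z) * g z ^ n"
    if "z \<in> ball 0 1" for n z
    by (simp add: Q1(3)[OF that] Q2(3)[OF that] algebra_simps)
  show ?case unfolding qrep_def
    by (rule exI[of _ "\<lambda>n. Q1 n + Q2 n"], rule exI[of _ "max D1 D2"]) (use a b c in blast)
next
  case (gscale L c)
  obtain Q1 D1 where Q1: "\<And>n. degree (Q1 n) \<le> D1" "\<And>e. ratf (\<lambda>n. coeff (Q1 n) e)"
    "\<And>n z. z \<in> ball 0 1 \<Longrightarrow> L (\<lambda>w. g w ^ n) z = poly (Q1 n) (g z) * g z ^ n"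
    using gscale.IH unfolding qrep_def by blast
  have a: "degree (smult c (Q1 n)) \<le> D1" for n
    using degree_smult_le[of c "Q1 n"] Q1(1)[of n] by simp
  have b: "ratf (\<lambda>n. coeff (smult c (Q1 n)) e)" for e
    by (simp add: ratf_mult[OF ratf_const Q1(2)])
  have cc: "c * L (\<lambda>w. g w ^ n) z = poly (smult c (Q1 n)) (g z) * g z ^ n"
    if "z \<in> ball 0 1" for n z
    by (simp add: Q1(3)[OF that] algebra_simps)
  show ?case unfolding qrep_def
    by (rule exI[of _ "\<lambda>n. smult c (Q1 n)"], rule exI[of _ D1]) (use a b cc in blast)
qed



lemma zero_g:
  assumes g: "g holomorphic_on ball 0 1" and gz: "\<And>z. z \<in> ball 0 1 \<Longrightarrow> g z = 0" and L: "L \<in> gops g"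
  shows "\<forall>f\<in>HD. \<forall>z\<in>ball 0 1. L f z = 0"
  using L
proof (induction rule: gops.induct)
  case gM then show ?case by (simp add: Mop_def gz)
next
  case gS
  show ?case
  proof (intro ballI)
    fix f and z :: complex assume f: "f \<in> HD" and z: "z \<in> ball 0 1"
    have pz: "path_image (linepath 0 z) \<subseteq> ball 0 1" using seg_ball[OF z] by simp
    show "Sop g f z = 0" unfolding Sop_def
      by (rule contour_integral_eq_0) (use pz gz in auto)
  qed
next
  case gT
  show ?case
  proof (intro ballI)
    fix f and z :: complex assume f: "f \<in> HD" and z: "z \<in> ball 0 1"
    have pz: "path_image (linepath 0 z) \<subseteq> ball 0 1" using seg_ball[OF z] by simp
    have dg: "deriv g x = 0" if x: "x \<in> ball 0 1" for x
    proof -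
      have "deriv g x = deriv (\<lambda>_. 0) x"
        by (rule complex_derivative_transform_within_open[OF g holomorphic_on_const open_ball x])
           (use gz in auto)
      then show ?thesis by simp
    qed
    show "Top g f z = 0" unfolding Top_def
      by (rule contour_integral_eq_0) (use pz dg in auto)
  qed
next
  case (gcomp L1 L2)
  have "good L2" using gops_good[OF g gcomp.hyps(2)] .
  then show ?case using gcomp.IH by (auto simp: good_def)
next
  case (gadd L1 L2) then show ?case by simp
next
  case (gscale L c) then show ?case by simp
qed

lemma partA:
  assumes g: "g holomorphic_on ball 0 1" and g0: "g 0 = 0" and L: "L \<in> gops g"
    and eq: "op_eq L (\<lambda>f z. poly P (g z) * f 0)"
  shows "op_eq L (\<lambda>f z. 0)"
proof (cases "\<forall>z\<in>ball 0 1. g z = 0")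
  case True
  then show ?thesis using zero_g[OF g _ L] by (simp add: op_eq_def)
next
  case False
  then obtain z1 where z1: "z1 \<in> ball 0 1" "g z1 \<noteq> 0" by blast
  obtain Q D where Q: "\<And>n. degree (Q n) \<le> D" "\<And>e. ratf (\<lambda>n. coeff (Q n) e)"
    "\<And>n z. z \<in> ball 0 1 \<Longrightarrow> L (\<lambda>w. g w ^ n) z = poly (Q n) (g z) * g z ^ n"
    using qrep[OF g g0 L] unfolding qrep_def by blast
  have eqv: "\<And>f z. f \<in> HD \<Longrightarrow> z \<in> ball 0 1 \<Longrightarrow> L f z = poly P (g z) * f 0"
    using eq by (simp add: op_eq_def)
  have nc: "\<not> g constant_on ball 0 1"
  proof
    assume "g constant_on ball 0 1"
    then obtain c where c: "\<forall>x\<in>ball 0 1. g x = c" by (auto simp: constant_on_def)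
    have "(0::complex) \<in> ball 0 1" by simp
    then show False using c z1 g0 by metis
  qed
  have op: "open (g ` ball 0 1)"
    by (rule open_mapping_thm[OF g open_ball connected_ball open_ball order_refl nc])
  define W where "W = g ` ball 0 1 - {0}"
  have infW: "infinite W"
  proof
    assume "finite W"
    then have "finite (insert 0 W)" by simp
    moreover have "g ` ball 0 1 \<subseteq> insert 0 W" unfolding W_def by blast
    ultimately have "finite (g ` ball 0 1)" by (rule finite_subset[rotated])
    then have "g ` ball 0 1 = {}" using op finite_imp_not_open by blast
    then show False using z1 by blast
  qed
  have Qz: "Q n = 0" if n: "n \<ge> 1" for n
  proof (rule ccontr)
    assume "Q n \<noteq> 0"
    then have "finite {x. poly (Q n) x = 0}" by (rule poly_roots_finite)
    moreover have "W \<subseteq> {x. poly (Q n) x = 0}"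
    proof
      fix w assume "w \<in> W"
      then obtain z where z: "z \<in> ball 0 1" "w = g z" "g z \<noteq> 0" by (auto simp: W_def)
      have "poly (Q n) (g z) * g z ^ n = poly P (g z) * g 0 ^ n"
        using Q(3)[OF z(1), of n] eqv[OF pow_HD[OF g] z(1), of n] by simp
      then have "poly (Q n) (g z) * g z ^ n = 0" using g0 n by simp
      then show "w \<in> {x. poly (Q n) x = 0}" using z by simp
    qed
    ultimately show False using infW finite_subset by blast
  qed
  have Q0: "Q 0 = 0"
  proof (rule poly_eqI)
    fix e
    have "coeff (Q 0) e = 0" by (rule ratf_zero[OF Q(2)[of e]]) (simp add: Qz)
    then show "coeff (Q 0) e = coeff 0 e" by simp
  qed
  show ?thesis unfolding op_eq_def
  proof (intro ballI)
    fix f and z :: complex assume f: "f \<in> HD" and z: "z \<in> ball 0 1"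
    have one: "(\<lambda>w. g w ^ 0) \<in> HD" by (rule pow_HD[OF g])
    have "poly P (g z) = L (\<lambda>w. g w ^ 0) z" using eqv[OF one z] by simp
    also have "\<dots> = 0" using Q(3)[OF z, of 0] Q0 by simp
    finally show "L f z = 0" using eqv[OF f z] by simp
  qed
qed

theorem proposition3p10:
  fixes g :: "complex \<Rightarrow> complex"
  assumes "g holomorphic_on ball 0 1"
  shows "(g 0 = 0 \<longrightarrow>
            (\<forall>(P :: complex poly) L. L \<in> gops g \<and> op_eq L (\<lambda>f z. poly P (g z) * f 0)
               \<longrightarrow> op_eq L (\<lambda>f z. 0)))
       \<and> (\<forall>L \<in> gops g. trivial_gop g L \<longleftrightarrow>
            (\<forall>l::nat. l \<ge> 1 \<longrightarrow> (\<forall>z\<in>ball 0 1. L (\<lambda>w. w ^ l) z = 0)))"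
proof -
  have A: "g 0 = 0 \<longrightarrow> (\<forall>(P :: complex poly) L. L \<in> gops g \<and> op_eq L (\<lambda>f z. poly P (g z) * f 0)
               \<longrightarrow> op_eq L (\<lambda>f z. 0))"
    using partA[OF assms] by blast
  have B: "trivial_gop g L \<longleftrightarrow> (\<forall>l::nat. l \<ge> 1 \<longrightarrow> (\<forall>z\<in>ball 0 1. L (\<lambda>w. w ^ l) z = 0))"
    if L: "L \<in> gops g" for L
  proof
    assume "trivial_gop g L"
    then obtain P where P: "op_eq L (\<lambda>f z. g 0 * poly P (g z - g 0) * f 0)" by (auto simp: trivial_gop_def)
    show "\<forall>l::nat. l \<ge> 1 \<longrightarrow> (\<forall>z\<in>ball 0 1. L (\<lambda>w. w ^ l) z = 0)"
    proof (intro allI impI ballI)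
      fix l :: nat and z :: complex assume l: "l \<ge> 1" and z: "z \<in> ball 0 1"
      have "(\<lambda>w::complex. w ^ l) \<in> HD"
        unfolding HD_def mem_Collect_eq by (intro holomorphic_on_power holomorphic_on_ident)
      then have "L (\<lambda>w. w ^ l) z = g 0 * poly P (g z - g 0) * 0 ^ l" using P z by (simp add: op_eq_def)
      then show "L (\<lambda>w. w ^ l) z = 0" using l by simp
    qed
  next
    assume K: "\<forall>l::nat. l \<ge> 1 \<longrightarrow> (\<forall>z\<in>ball 0 1. L (\<lambda>w. w ^ l) z = 0)"
    have gd: "good L" by (rule gops_good[OF assms L])
    obtain G where G: "\<forall>z\<in>ball 0 1. L (\<lambda>w. g w ^ 0) z = poly G (g z)" using brep[OF assms L] by blast
    have E: "op_eq L (\<lambda>f z. poly G (g z) * f 0)"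
      unfolding op_eq_def
    proof (intro ballI)
      fix f and z :: complex assume f: "f \<in> HD" and z: "z \<in> ball 0 1"
      have "L f z = f 0 * L (\<lambda>w. 1) z" by (rule kill_monos[OF gd _ f z]) (use K in auto)
      then show "L f z = poly G (g z) * f 0" using G z by simp
    qed
    show "trivial_gop g L"
    proof (cases "g 0 = 0")
      case True
      have Z: "op_eq L (\<lambda>f z. 0)" by (rule partA[OF assms True L E])
      have "op_eq L (\<lambda>f z. g 0 * poly 0 (g z - g 0) * f 0)" using Z True by (simp add: op_eq_def)
      then show ?thesis unfolding trivial_gop_def by blast
    next
      case False
      have "op_eq L (\<lambda>f z. g 0 * poly (smult (inverse (g 0)) (G \<circ>\<^sub>p [:g 0, 1:])) (g z - g 0) * f 0)"
        using E False by (simp add: op_eq_def poly_pcompose)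
      then show ?thesis unfolding trivial_gop_def by blast
    qed
  qed
  show ?thesis using A B by blast
qed

end
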